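(* Let $q=p^e$ with $p$ a prime and $e\ge1$, let $r\ge2$, $m=2r$, $D=\{x\in\mathbb{F}_{q^m}:\mathrm{Tr}_{q^r/q}(x^{q^r+1})=0\}=\{d_1,\dots,d_n\}$ with $n=q^{r-1}(q^r-q+1)$, and let $\alpha$ be a generator of $\mathbb{F}_{q^m}^*$. Let $G_1$ be the $(m+1)\times n$ matrix whose first row is $(1,\dots,1)$, whose second row is $(\mathrm{Tr}_{q^m/q}(d_j))_{j}$, whose third row is $(\mathrm{Tr}_{q^m/q}(\alpha d_j)+1)_j$, and whose $(i+2)$-th row for $2\le i\le m-1$ is $(\mathrm{Tr}_{q^m/q}(\alpha^i d_j))_j$. Let $G_1'=[I_{m+1}:G_1]$. If $p\nmid r$, then the linear code generated by $G_1'$ has parameters $[n+m+1,\ m+1,\ q^{r-1}(q^r-q^{r-1}-q+1)+1]$.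
   Context: $\mathrm{Tr}_{q^k/q}$ is the trace map from $\mathbb{F}_{q^k}$ to $\mathbb{F}_q$; $I_{m+1}$ is the identity matrix of size $m+1$. *)

theory Defs
  imports Main "HOL-Computational_Algebra.Primes"
begin

definition trace :: "nat \<Rightarrow> nat \<Rightarrow> 'a::field \<Rightarrow> 'a" where
  "trace q k x = (\<Sum>i<k. x ^ (q ^ i))"

definition subfield_q :: "nat \<Rightarrow> 'a::field set" where
  "subfield_q q = {x. x ^ q = x}"

definition mult_generator :: "'a::field \<Rightarrow> bool" where
  "mult_generator \<alpha> \<longleftrightarrow> \<alpha> \<noteq> 0 \<and> (\<forall>x. x \<noteq> 0 \<longrightarrow> (\<exists>k::nat. \<alpha> ^ k = x))"

text \<open>Codewords of length N are functions nat => 'a, zero outside {..<N}.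
  Linear code over F_q generated by the k rows of the matrix G (k x N).\<close>
definition lin_code :: "nat \<Rightarrow> nat \<Rightarrow> nat \<Rightarrow> (nat \<Rightarrow> nat \<Rightarrow> 'a::field) \<Rightarrow> (nat \<Rightarrow> 'a) set" where
  "lin_code q k N G = {c. \<exists>a. (\<forall>i<k. a i \<in> subfield_q q) \<and>
       c = (\<lambda>j. if j < N then (\<Sum>i<k. a i * G i j) else 0)}"

definition hamming_wt :: "nat \<Rightarrow> (nat \<Rightarrow> 'a::zero) \<Rightarrow> nat" where
  "hamming_wt N c = card {j. j < N \<and> c j \<noteq> 0}"

definition min_dist :: "nat \<Rightarrow> (nat \<Rightarrow> 'a::zero) set \<Rightarrow> nat" where
  "min_dist N C = Min {hamming_wt N c | c. c \<in> C \<and> c \<noteq> (\<lambda>_. 0)}"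

text \<open>The (m+1) x n matrix G1 (rows 0-indexed).\<close>
definition G1 :: "nat \<Rightarrow> nat \<Rightarrow> 'a::field \<Rightarrow> (nat \<Rightarrow> 'a) \<Rightarrow> nat \<Rightarrow> nat \<Rightarrow> 'a" where
  "G1 q m \<alpha> d i j =
     (if i = 0 then 1
      else if i = 1 then trace q m (d j)
      else if i = 2 then trace q m (\<alpha> * d j) + 1
      else trace q m (\<alpha> ^ (i - 1) * d j))"

definition G1' :: "nat \<Rightarrow> nat \<Rightarrow> 'a::field \<Rightarrow> (nat \<Rightarrow> 'a) \<Rightarrow> nat \<Rightarrow> nat \<Rightarrow> 'a" where
  "G1' q m \<alpha> d i j =
     (if j < m + 1 then (if i = j then 1 else 0) else G1 q m \<alpha> d i (j - (m + 1)))"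

end

theory Submission
  imports Defs "HOL-Number_Theory.Residues" "HOL-Library.FuncSet" "HOL-Computational_Algebra.Polynomial"
begin


lemma nat_pow_minus1_dvd: "(q::nat) - 1 dvd q ^ n - 1"
proof (induction n)
  case 0 then show ?case by simp
next
  case (Suc n)
  show ?case
  proof (cases "q = 0")
    case True then show ?thesis by simp
  next
    case False
    then have "q ^ Suc n - 1 = q * (q ^ n - 1) + (q - 1)"
      by (simp add: algebra_simps diff_mult_distrib2)
    then show ?thesis using Suc by simp
  qed
qed

locale ffs =
  fixes p e q r :: nat and \<alpha> :: "'a::{field,finite}"
  assumes prime_p: "prime p" and e_pos: "e \<ge> 1" and q_def: "q = p ^ e" and r_pos: "r \<ge> 1"
    and card_F: "card (UNIV::'a set) = q ^ (2*r)" and gen: "mult_generator \<alpha>"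
begin

lemma q_gt1: "q > 1"
  unfolding q_def by (rule one_less_power) (use prime_p e_pos prime_gt_1_nat in auto)

lemma CHAR_eq: "CHAR('a) = p"
proof -
  have pos: "CHAR('a) > 0" by (rule finite_imp_CHAR_pos) simp
  have pr: "prime CHAR('a)" using pos prime_CHAR_semidom by blast
  have "CHAR('a) dvd p ^ (e * (2*r))" using CHAR_dvd_CARD[where 'a='a] card_F q_def by (simp add: power_mult)
  then have "CHAR('a) dvd p" using pr prime_dvd_power by blast
  then show ?thesis using pr prime_p by (simp add: primes_dvd_imp_eq)
qed

lemma frob_add: "(x + y :: 'a) ^ (q ^ k) = x ^ (q ^ k) + y ^ (q ^ k)"
proof -
  have "prime CHAR('a)" using CHAR_eq prime_p by simp
  moreover have "q ^ k = CHAR('a) ^ (e * k)" using CHAR_eq q_def by (simp add: power_mult)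
  ultimately show ?thesis by (rule freshmans_dream')
qed

lemma frob_sum: "(sum f A :: 'a) ^ (q ^ k) = (\<Sum>i\<in>A. f i ^ (q ^ k))"
proof -
  have "prime CHAR('a)" using CHAR_eq prime_p by simp
  moreover have "q ^ k = CHAR('a) ^ (e * k)" using CHAR_eq q_def by (simp add: power_mult)
  ultimately show ?thesis by (rule freshmans_dream_sum')
qed

lemma frob_neg: "(- x :: 'a) ^ (q ^ k) = - (x ^ (q ^ k))"
proof -
  have "0 = (x + - x) ^ (q ^ k)" using q_gt1 by simp
  also have "\<dots> = x ^ (q ^ k) + (- x) ^ (q ^ k)" by (rule frob_add)
  finally show ?thesis by (simp add: eq_neg_iff_add_eq_0 add.commute)
qed

lemma frob_diff: "(x - y :: 'a) ^ (q ^ k) = x ^ (q ^ k) - y ^ (q ^ k)"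
  using frob_add[of x "-y" k] frob_neg[of y k] by simp

definition Qc :: nat where "Qc = q ^ (2*r)"

lemma Qc_gt1: "Qc > 1" unfolding Qc_def by (rule one_less_power) (use q_gt1 r_pos in auto)

definition Q1 :: nat where "Q1 = Qc - 1"
lemma Q1_pos: "Q1 > 0" using Qc_gt1 Q1_def by simp
lemma Q1_Suc: "Qc = Suc Q1" using Qc_gt1 Q1_def by simp


lemma pow_card: "(x::'a) ^ Qc = x"
proof (cases "x = 0")
  case False
  have "x * (\<Prod>y\<in>UNIV-{0}. x * y) = x * x ^ (card (UNIV :: 'a set) - 1) * \<Prod>(UNIV-{0})"
    by (simp add: prod.distrib mult_ac)
  also have "x * x ^ (card (UNIV :: 'a set) - 1) = x ^ Suc (card (UNIV :: 'a set) - 1)"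
    by (subst power_Suc) auto
  also have "Suc (card (UNIV :: 'a set) - 1) = card (UNIV :: 'a set)"
    using finite_UNIV_card_ge_0[where ?'a = 'a] by simp
  also have "(\<Prod>y\<in>UNIV-{0}. x * y) = (\<Prod>y\<in>UNIV-{0}. y)"
    by (rule prod.reindex_bij_witness[of _ "\<lambda>y. y / x" "\<lambda>y. x * y"]) (use False in auto)
  finally show ?thesis
    using card_F Qc_def by simp
qed (use Qc_gt1 in auto)

lemma alpha_nz: "\<alpha> \<noteq> 0" using gen unfolding mult_generator_def by simp

lemma alpha_pow_Qm1: "\<alpha> ^ (Q1) = 1"
proof -
  have "\<alpha> * \<alpha> ^ (Q1) = \<alpha> * 1"
    using pow_card[of \<alpha>] Q1_Suc by simp
  then show ?thesis using alpha_nz by simp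
qed

lemma alpha_pow_mod: "\<alpha> ^ k = \<alpha> ^ (k mod (Q1))"
proof -
  have "\<alpha> ^ k = \<alpha> ^ ((Q1) * (k div (Q1)) + k mod (Q1))" by simp
  also have "\<dots> = (\<alpha> ^ Q1) ^ (k div Q1) * \<alpha> ^ (k mod Q1)" by (simp only: power_add power_mult)
  also have "\<dots> = \<alpha> ^ (k mod (Q1))" by (simp add: alpha_pow_Qm1)
  finally show ?thesis .
qed

lemma alpha_bij: "bij_betw (\<lambda>k. \<alpha> ^ k) {..<Q1} (UNIV - {0})"
proof -
  have sur: "(\<lambda>k. \<alpha> ^ k) ` {..<Q1} = UNIV - {0}"
  proof
    show "(\<lambda>k. \<alpha> ^ k) ` {..<Q1} \<subseteq> UNIV - {0}" using alpha_nz by auto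
    show "UNIV - {0} \<subseteq> (\<lambda>k. \<alpha> ^ k) ` {..<Q1}"
    proof
      fix x :: 'a assume "x \<in> UNIV - {0}"
      then obtain k where "\<alpha> ^ k = x" using gen unfolding mult_generator_def by auto
      then have "x = \<alpha> ^ (k mod (Q1))" using alpha_pow_mod by metis
      moreover have "k mod (Q1) < Q1" using Q1_pos by simp
      ultimately show "x \<in> (\<lambda>k. \<alpha> ^ k) ` {..<Q1}" by blast
    qed
  qed
  have "card (UNIV - {0::'a}) = Q1" using card_F Qc_def Q1_def by (simp add: card_Diff_singleton)
  then have "inj_on (\<lambda>k. \<alpha> ^ k) {..<Q1}"
    using sur by (intro eq_card_imp_inj_on) auto
  then show ?thesis using sur by (simp add: bij_betw_def)
qed

lemma alpha_pow_eq1: "\<alpha> ^ j = 1 \<longleftrightarrow> (Q1) dvd j"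
proof
  assume h: "\<alpha> ^ j = 1"
  have inj: "inj_on (\<lambda>k. \<alpha> ^ k) {..<Q1}" using alpha_bij bij_betw_def by blast
  have "\<alpha> ^ (j mod (Q1)) = \<alpha> ^ 0" using h alpha_pow_mod by simp
  moreover have "j mod (Q1) \<in> {..<Q1}" "(0::nat) \<in> {..<Q1}" using Q1_pos by auto
  ultimately have "j mod (Q1) = 0" using inj_onD[OF inj] by blast
  then show "(Q1) dvd j" by auto
next
  assume "(Q1) dvd j"
  then obtain t where "j = (Q1) * t" by auto
  then show "\<alpha> ^ j = 1" by (simp add: power_mult alpha_pow_Qm1)
qed

lemma card_roots_unity:
  assumes "s dvd Q1"
  shows "card {x::'a. x ^ s = 1} = s"
proof -
  obtain M where M: "Q1 = s * M" using assms by auto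
  have s0: "s > 0" "M > 0" using M Q1_pos by (auto intro!: gr0I)
  have "{x::'a. x ^ s = 1} = (\<lambda>k. \<alpha> ^ k) ` {k. k < Q1 \<and> M dvd k}"
  proof
    show "{x::'a. x ^ s = 1} \<subseteq> (\<lambda>k. \<alpha> ^ k) ` {k. k < Q1 \<and> M dvd k}"
    proof
      fix x :: 'a assume "x \<in> {x. x ^ s = 1}"
      then have x1: "x ^ s = 1" by simp
      then have "x \<noteq> 0" using s0 by (cases "x=0") (auto simp: power_0_left)
      then have "x \<in> (\<lambda>k. \<alpha> ^ k) ` {..<Q1}" using alpha_bij by (auto simp: bij_betw_def)
      then obtain k where k: "k < Q1" "\<alpha> ^ k = x" by auto
      then have "\<alpha> ^ (k * s) = 1" using x1 by (simp add: power_mult)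
      then have "s * M dvd k * s" using alpha_pow_eq1 M by simp
      then have "M dvd k" using s0 by (simp add: mult.commute)
      then show "x \<in> (\<lambda>k. \<alpha> ^ k) ` {k. k < Q1 \<and> M dvd k}" using k by auto
    qed
    show "(\<lambda>k. \<alpha> ^ k) ` {k. k < Q1 \<and> M dvd k} \<subseteq> {x::'a. x ^ s = 1}"
    proof
      fix x assume "x \<in> (\<lambda>k. \<alpha> ^ k) ` {k. k < Q1 \<and> M dvd k}"
      then obtain k t where "x = \<alpha> ^ k" "k = M * t" by auto
      then have "x ^ s = \<alpha> ^ ((Q1) * t)" using M by (simp add: power_mult[symmetric] mult_ac)
      then show "x \<in> {x. x ^ s = 1}" by (simp add: power_mult alpha_pow_Qm1)
    qed
  qed
  also have "card \<dots> = card {k. k < Q1 \<and> M dvd k}"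
    using alpha_bij by (intro card_image) (auto simp: bij_betw_def intro: inj_on_subset)
  also have "{k. k < Q1 \<and> M dvd k} = (\<lambda>t. M * t) ` {..<s}"
  proof
    show "{k. k < Q1 \<and> M dvd k} \<subseteq> (\<lambda>t. M * t) ` {..<s}"
    proof
      fix k assume "k \<in> {k. k < Q1 \<and> M dvd k}"
      then obtain t where "k = M * t" "M * t < s * M" using M by auto
      then show "k \<in> (\<lambda>t. M * t) ` {..<s}" by (auto simp: mult.commute)
    qed
    show "(\<lambda>t. M * t) ` {..<s} \<subseteq> {k. k < Q1 \<and> M dvd k}" using M s0 by (auto simp: mult.commute)
  qed
  also have "card \<dots> = s" using s0 by (subst card_image) (auto intro: inj_onI)
  finally show ?thesis .
qed

end



context ffs begin

definition Ef :: "nat \<Rightarrow> 'a set" where "Ef k = {x::'a. x ^ (q ^ k) = x}"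

lemma E_add: "x \<in> Ef k \<Longrightarrow> y \<in> Ef k \<Longrightarrow> x + y \<in> Ef k"
  unfolding Ef_def by (simp add: frob_add)
lemma E_neg: "x \<in> Ef k \<Longrightarrow> - x \<in> Ef k"
  unfolding Ef_def by (simp add: frob_neg)
lemma E_diff: "x \<in> Ef k \<Longrightarrow> y \<in> Ef k \<Longrightarrow> x - y \<in> Ef k"
  unfolding Ef_def by (simp add: frob_diff)
lemma E_mult: "x \<in> Ef k \<Longrightarrow> y \<in> Ef k \<Longrightarrow> x * y \<in> Ef k"
  unfolding Ef_def by (simp add: power_mult_distrib)
lemma E_div: "x \<in> Ef k \<Longrightarrow> y \<in> Ef k \<Longrightarrow> x / y \<in> Ef k"
  unfolding Ef_def by (simp add: power_divide)
lemma E_0: "0 \<in> Ef k" unfolding Ef_def using q_gt1 by simp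
lemma E_1: "1 \<in> Ef k" unfolding Ef_def by simp

lemma Fq_eq: "subfield_q q = Ef 1" unfolding subfield_q_def Ef_def by simp

lemma Fq_pow: "c \<in> subfield_q q \<Longrightarrow> c ^ (q ^ k) = c"
proof (induction k)
  case 0 then show ?case by simp
next
  case (Suc k)
  have "c ^ (q ^ Suc k) = (c ^ (q ^ k)) ^ q" by (simp add: power_mult[symmetric] mult.commute)
  then show ?case using Suc by (simp add: subfield_q_def)
qed

lemma Fq_sub: "subfield_q q \<subseteq> Ef k" unfolding Ef_def using Fq_pow by auto

lemma E_UNIV: "Ef (2*r) = UNIV" unfolding Ef_def using pow_card Qc_def by auto

lemma card_E:
  assumes "k dvd 2*r" "k \<ge> 1"
  shows "card (Ef k) = q ^ k"
proof -
  obtain j where j: "2*r = k * j" using assms by auto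
  have dv: "q ^ k - 1 dvd Q1"
    using nat_pow_minus1_dvd[of "q^k" j] j by (simp add: Q1_def Qc_def power_mult)
  have qk: "q ^ k \<ge> 1" using q_gt1 by simp
  have pS: "x * x ^ (q ^ k - 1) = x ^ (q ^ k)" for x :: 'a
  proof -
    have "x * x ^ (q ^ k - 1) = x ^ Suc (q ^ k - 1)" by (rule power_Suc[symmetric])
    also have "Suc (q ^ k - 1) = q ^ k" using qk by simp
    finally show ?thesis .
  qed
  have "Ef k = insert (0::'a) {x::'a. x ^ (q ^ k - 1) = 1}"
  proof (rule Set.set_eqI, rule iffI)
    fix x :: 'a assume "x \<in> Ef k"
    then have x: "x ^ (q^k) = x" by (simp add: Ef_def)
    show "x \<in> insert 0 {x. x ^ (q ^ k - 1) = 1}"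
    proof (cases "x = 0")
      case False
      have g1: "x * x ^ (q ^ k - 1) = x * 1" using x pS by simp
      have "x ^ (q ^ k - 1) = 1" using mult_left_cancel[OF False] g1 by blast
      then show ?thesis by simp
    next
      case True then show ?thesis by simp
    qed
  next
    fix x :: 'a assume h: "x \<in> insert 0 {x. x ^ (q ^ k - 1) = 1}"
    show "x \<in> Ef k"
    proof (cases "x = 0")
      case True then show ?thesis by (simp add: E_0)
    next
      case False
      from h False have h1: "x ^ (q ^ k - 1) = 1" by simp
      have h2: "x * x ^ (q ^ k - 1) = x" by (simp only: h1 mult_1_right)
      have h3: "x ^ (q ^ k) = x" using pS[of x] h2 by simp
      show ?thesis using h3 by (simp add: Ef_def)
    qed
  qed
  moreover have "0 \<notin> {x::'a. x ^ (q ^ k - 1) = 1}"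
  proof
    assume "0 \<in> {x::'a. x ^ (q ^ k - 1) = 1}"
    then have "(0::'a) ^ (q ^ k - 1) = 1" by simp
    moreover have "q ^ k - 1 > 0" proof - have "1 < q ^ k" using q_gt1 assms(2) by (intro one_less_power) auto then show ?thesis by simp qed
    ultimately show False by (simp add: zero_power)
  qed
  moreover have "finite {x::'a. x ^ (q ^ k - 1) = 1}" by simp
  ultimately show ?thesis using card_roots_unity[OF dv] qk by simp
qed

lemma card_Fq: "card (subfield_q q :: 'a set) = q"
  using card_E[of 1] Fq_eq by simp

lemma card_K: "card (Ef r) = q ^ r"
  using card_E[of r] r_pos by simp

lemma tr_add: "trace q k (x + y) = trace q k x + (trace q k y :: 'a)"
  unfolding trace_def by (simp add: frob_add sum.distrib)
lemma tr_neg: "trace q k (- x) = - (trace q k x :: 'a)"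
  unfolding trace_def by (simp add: frob_neg sum_negf)
lemma tr_diff: "trace q k (x - y) = trace q k x - (trace q k y :: 'a)"
  unfolding trace_def by (simp add: frob_diff sum_subtractf)
lemma tr_smul: "c \<in> subfield_q q \<Longrightarrow> trace q k (c * x) = c * (trace q k x :: 'a)"
  unfolding trace_def by (simp add: power_mult_distrib Fq_pow sum_distrib_left)
lemma tr_0: "trace q k (0::'a) = 0"
  unfolding trace_def using q_gt1 by (auto intro!: sum.neutral simp: zero_power)

lemma tr_in_Fq:
  assumes "x \<in> Ef k"
  shows "trace q k x \<in> subfield_q q"
proof -
  have xk: "x ^ (q ^ k) = x" using assms Ef_def by simp
  define f where "f i = x ^ (q ^ i)" for i
  have "(trace q k x) ^ q = (\<Sum>i<k. f i ^ (q ^ 1))" unfolding trace_def f_def using frob_sum[of _ _ 1] by simp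
  also have "\<dots> = (\<Sum>i<k. f (Suc i))" unfolding f_def by (simp add: power_mult[symmetric] mult.commute)
  also have "\<dots> = (\<Sum>i<k. f i)"
  proof -
    have "(\<Sum>i<Suc k. f i) = f 0 + (\<Sum>i<k. f (Suc i))" by (rule sum.lessThan_Suc_shift)
    moreover have "(\<Sum>i<Suc k. f i) = (\<Sum>i<k. f i) + f k" by simp
    moreover have "f k = f 0" using xk f_def by simp
    ultimately show ?thesis by (simp add: add.commute)
  qed
  finally show ?thesis unfolding subfield_q_def trace_def f_def by simp
qed

lemma tr_nonzero:
  assumes "k \<ge> 1" "card (Ef k) = q ^ k"
  shows "\<exists>y\<in>Ef k. trace q k y \<noteq> 0"
proof (rule ccontr)
  assume "\<not> (\<exists>y\<in>Ef k. trace q k y \<noteq> 0)"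
  then have sub: "Ef k \<subseteq> {x. trace q k x = 0}" by auto
  define P :: "'a poly" where "P = (\<Sum>i<k. monom 1 (q ^ i))"
  have polyP: "poly P x = trace q k x" for x unfolding P_def trace_def by (simp add: poly_sum poly_monom)
  have inj: "q ^ i = q ^ j \<longleftrightarrow> i = j" for i j using q_gt1 by (simp add: power_inject_exp)
  have "coeff P (q ^ (k - 1)) = (\<Sum>i<k. if q ^ i = q ^ (k - 1) then 1 else 0)"
    unfolding P_def by (simp add: coeff_sum)
  also have "\<dots> = (\<Sum>i<k. if i = k - 1 then 1 else 0)" by (simp only: inj)
  also have "\<dots> = 1" using assms(1) by simp
  finally have cP: "coeff P (q ^ (k - 1)) = 1" .
  then have P0: "P \<noteq> 0" by auto
  have "degree P \<le> q ^ (k - 1)"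
  proof (rule degree_le, intro allI impI)
    fix n assume n: "q ^ (k - 1) < n"
    have "q ^ i < n" if "i < k" for i
    proof -
      have "q ^ i \<le> q ^ (k - 1)" using that q_gt1 by (intro power_increasing) auto
      then show ?thesis using n by simp
    qed
    then have "\<forall>i\<in>{..<k}. coeff (monom (1::'a) (q^i)) n = 0" by auto
    then show "coeff P n = 0" unfolding P_def coeff_sum by (rule sum.neutral)
  qed
  moreover have "card {x. poly P x = 0} \<le> degree P" using P0 by (rule card_poly_roots_bound)
  moreover have "card (Ef k) \<le> card {x. poly P x = 0}" using sub polyP by (intro card_mono) auto
  moreover have "q ^ (k - 1) < q ^ k" using q_gt1 assms(1) by (intro power_strict_increasing) auto
  ultimately show False using assms(2) by simp
qed

lemma tr_fiber:
  assumes "k \<ge> 1" "card (Ef k) = q ^ k" "c \<in> subfield_q q"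
  shows "card {x\<in>Ef k. trace q k x = c} = q ^ (k - 1)"
proof -
  obtain y where y: "y \<in> Ef k" "trace q k y \<noteq> 0" using tr_nonzero assms by blast
  have tyF: "trace q k y \<in> subfield_q q" using tr_in_Fq y by simp
  let ?F = "\<lambda>c. {x\<in>Ef k. trace q k x = c}"
  have fib: "card (?F c) = card (?F 0)" if c: "c \<in> subfield_q q" for c
  proof -
    define u where "u = (c / trace q k y) * y"
    have cF: "c / trace q k y \<in> subfield_q q" using c tyF Fq_eq E_div by simp
    have uE: "u \<in> Ef k" unfolding u_def using cF Fq_sub y E_mult by blast
    have tu: "trace q k u = c" unfolding u_def using tr_smul[OF cF] y by simp
    have "bij_betw (\<lambda>x. x + u) (?F 0) (?F c)"
    proof (rule bij_betw_byWitness[where f'="\<lambda>x. x - u"])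
      show "\<forall>a\<in>?F 0. a + u - u = a" by simp
      show "\<forall>a\<in>?F c. a - u + u = a" by simp
      show "(\<lambda>x. x + u) ` ?F 0 \<subseteq> ?F c" using uE tu by (auto simp: E_add tr_add)
      show "(\<lambda>x. x - u) ` ?F c \<subseteq> ?F 0" using uE tu by (auto simp: E_diff tr_diff)
    qed
    then show ?thesis by (simp add: bij_betw_same_card)
  qed
  have "Ef k = (\<Union>c\<in>subfield_q q. ?F c)" using tr_in_Fq by auto
  moreover have "card (\<Union>c\<in>subfield_q q. ?F c) = (\<Sum>c\<in>subfield_q q. card (?F c))"
    by (rule card_UN_disjoint) auto
  ultimately have "card (Ef k) = (\<Sum>c\<in>subfield_q q. card (?F c))" by simp
  also have "\<dots> = q * card (?F 0)" using fib card_Fq by simp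
  finally have "q * card (?F 0) = q * q ^ (k - 1)"
    using assms(1,2) by (cases k) auto
  then have "card (?F 0) = q ^ (k - 1)" using q_gt1 by simp
  then show ?thesis using fib[OF assms(3)] by simp
qed

end



lemma card_ind: "finite A \<Longrightarrow> card {x\<in>A. P x} = (\<Sum>x\<in>A. if P x then 1 else 0)"
  by (simp add: sum.If_cases Int_def)

context ffs begin

definition Nm :: "'a \<Rightarrow> 'a" where "Nm x = x ^ (q ^ r + 1)"

lemma Nm_eq: "Nm x = x ^ (q ^ r) * x" unfolding Nm_def by simp

lemma Qc_eq: "Qc = q ^ r * q ^ r" unfolding Qc_def by (simp add: power_add[symmetric] mult_2)

lemma conj_conj: "(x ^ (q ^ r)) ^ (q ^ r) = (x::'a)"
  using pow_card[of x] by (simp add: power_mult[symmetric] Qc_eq)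

lemma Nm_in_K: "Nm x \<in> Ef r"
  unfolding Ef_def Nm_eq by (simp add: power_mult_distrib conj_conj mult.commute)

lemma Nm_mult: "Nm (x * y) = Nm x * Nm y" unfolding Nm_def by (simp add: power_mult_distrib)

lemma Nm_zero_iff: "Nm x = 0 \<longleftrightarrow> x = 0" unfolding Nm_def using q_gt1 by simp

lemma card_ker: "card {x::'a. Nm x = 1} = q ^ r + 1"
proof -
  have "q ^ r + 1 dvd Q1"
  proof
    have "q ^ r \<ge> 1" using q_gt1 by simp
    then show "Q1 = (q ^ r + 1) * (q ^ r - 1)" unfolding Q1_def Qc_eq
      by (simp add: algebra_simps diff_mult_distrib2)
  qed
  then show ?thesis unfolding Nm_def by (rule card_roots_unity)
qed

lemma Nm_surj:
  assumes "b \<in> Ef r" "b \<noteq> 0"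
  shows "\<exists>x. Nm x = b"
proof -
  have "b \<in> (\<lambda>k. \<alpha> ^ k) ` {..<Q1}" using alpha_bij assms(2) by (auto simp: bij_betw_def)
  then obtain k where k: "b = \<alpha> ^ k" by auto
  have qr: "Suc (q ^ r - 1) = q ^ r" using q_gt1 by simp
  have g: "b * b ^ (q ^ r - 1) = b * 1"
  proof -
    have "b * b ^ (q ^ r - 1) = b ^ Suc (q ^ r - 1)" by (rule power_Suc[symmetric])
    also have "\<dots> = b ^ (q ^ r)" by (simp only: qr)
    also have "\<dots> = b" using assms(1) by (simp add: Ef_def)
    finally show ?thesis by simp
  qed
  have b1: "b ^ (q ^ r - 1) = 1" using mult_left_cancel[OF assms(2)] g by blast
  have Q1e: "Q1 = (q ^ r - 1) * (q ^ r + 1)"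
  proof -
    have "q ^ r \<ge> 1" using q_gt1 by simp
    then show ?thesis unfolding Q1_def Qc_eq by (simp add: algebra_simps diff_mult_distrib2)
  qed
  have "\<alpha> ^ (k * (q ^ r - 1)) = 1" using b1 unfolding k by (simp only: power_mult)
  then have "Q1 dvd k * (q ^ r - 1)" using alpha_pow_eq1 by blast
  then have h: "(q ^ r - 1) * (q ^ r + 1) dvd (q ^ r - 1) * k" unfolding Q1e by (simp only: mult.commute)
  have pos: "q ^ r - 1 \<noteq> 0"
  proof -
    have "1 < q ^ r" using q_gt1 r_pos by (intro one_less_power) auto
    then show ?thesis by simp
  qed
  have "q ^ r - 1 = 0 \<or> q ^ r + 1 dvd k" using h by (subst (asm) nat_mult_dvd_cancel_disj)
  then have "q ^ r + 1 dvd k" using pos by blast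
  then obtain j where j: "k = (q ^ r + 1) * j" by auto
  have "Nm (\<alpha> ^ j) = \<alpha> ^ (j * (q ^ r + 1))" unfolding Nm_def by (rule power_mult[symmetric])
  also have "\<dots> = b" unfolding k j by (simp only: mult.commute)
  finally show ?thesis by blast
qed

lemma card_Nm_fiber:
  assumes "b \<in> Ef r" "b \<noteq> 0"
  shows "card {x. Nm x = b} = q ^ r + 1"
proof -
  obtain x0 where x0: "Nm x0 = b" using Nm_surj assms by blast
  then have x0nz: "x0 \<noteq> 0" using assms(2) Nm_zero_iff by auto
  have "{x. Nm x = b} = (\<lambda>z. x0 * z) ` {z. Nm z = 1}"
  proof (rule Set.set_eqI, rule iffI)
    fix x assume "x \<in> {x. Nm x = b}"
    then have "Nm (x / x0) = 1" using x0 x0nz assms(2)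
      by (simp add: Nm_def power_divide)
    moreover have "x = x0 * (x / x0)" using x0nz by simp
    ultimately show "x \<in> (\<lambda>z. x0 * z) ` {z. Nm z = 1}" by blast
  next
    fix x assume "x \<in> (\<lambda>z. x0 * z) ` {z. Nm z = 1}"
    then show "x \<in> {x. Nm x = b}" using x0 by (auto simp: Nm_mult)
  qed
  also have "card \<dots> = card {z. Nm z = 1}" using x0nz by (intro card_image inj_onI) auto
  finally show ?thesis using card_ker by simp
qed

lemma Zcount:
  assumes c: "c \<in> subfield_q q"
  shows "card {x. trace q r (Nm x) = c} + (if c = 0 then q ^ r else 0) = (q ^ r + 1) * q ^ (r - 1)"
proof -
  let ?B = "{b\<in>Ef r. b \<noteq> 0 \<and> trace q r b = c}"
  have fibK: "card {b\<in>Ef r. trace q r b = c} = q ^ (r - 1)"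
    using tr_fiber[OF r_pos card_K c] .
  have B: "card ?B + (if c = 0 then 1 else 0) = q ^ (r - 1)"
  proof (cases "c = 0")
    case True
    then have "{b\<in>Ef r. trace q r b = c} = insert 0 ?B" using E_0 tr_0 by auto
    moreover have "finite ?B" by simp
    ultimately show ?thesis using fibK True by simp
  next
    case False
    then have "{b\<in>Ef r. trace q r b = c} = ?B" using tr_0 by auto
    then show ?thesis using fibK False by simp
  qed
  have nz: "{x. x \<noteq> 0 \<and> trace q r (Nm x) = c} = (\<Union>b\<in>?B. {x. Nm x = b})"
    using Nm_in_K Nm_zero_iff by auto
  have "card (\<Union>b\<in>?B. {x. Nm x = b}) = (\<Sum>b\<in>?B. card {x. Nm x = b})"
    by (rule card_UN_disjoint) auto
  also have "\<dots> = (\<Sum>b\<in>?B. q ^ r + 1)" using card_Nm_fiber by (intro sum.cong) auto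
  finally have c2: "card {x. x \<noteq> 0 \<and> trace q r (Nm x) = c} = (q ^ r + 1) * card ?B"
    using nz by simp
  have split: "{x. trace q r (Nm x) = c} = {x. x \<noteq> 0 \<and> trace q r (Nm x) = c} \<union> {x. x = 0 \<and> c = 0}"
    using tr_0 Nm_zero_iff by (auto simp: Nm_def zero_power)
  have "card {x. trace q r (Nm x) = c} = card {x. x \<noteq> 0 \<and> trace q r (Nm x) = c} + card {x::'a. x = 0 \<and> c = 0}"
    unfolding split by (rule card_Un_disjoint) auto
  also have "card {x::'a. x = 0 \<and> c = 0} = (if c = 0 then 1 else 0)" by auto
  finally have c3: "card {x. trace q r (Nm x) = c} = (q ^ r + 1) * card ?B + (if c = 0 then 1 else 0)"
    using c2 by simp
  show ?thesis
  proof (cases "c = 0")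
    case True
    then have e1: "q ^ (r - 1) = card ?B + 1" using B by simp
    have X: "card {x. trace q r (Nm x) = c} = (q^r+1)*card ?B + 1" using c3 by (simp only: if_P[OF True])
    have Y: "(if c = 0 then q^r else 0) = q^r" by (simp only: if_P[OF True])
    show ?thesis unfolding Y X e1 by (simp add: algebra_simps)
  next
    case False
    then show ?thesis using c3 B by simp
  qed
qed

end



lemma sum_lessThan_add_split: "(\<Sum>i<(a::nat) + b. f i) = (\<Sum>i<a. f i) + (\<Sum>i<b. f (a + i))"
  by (induction b) (simp_all add: add.assoc)

context ffs begin

lemma tr_r_m: "trace q r (z + z ^ (q ^ r)) = trace q (2 * r) (z::'a)"
proof -
  have "trace q r (z + z ^ (q ^ r)) = (\<Sum>i<r. z ^ (q ^ i)) + (\<Sum>i<r. (z ^ (q ^ r)) ^ (q ^ i))"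
    unfolding trace_def by (simp add: frob_add sum.distrib)
  also have "(\<Sum>i<r. (z ^ (q ^ r)) ^ (q ^ i)) = (\<Sum>i<r. z ^ (q ^ (r + i)))"
    by (simp add: power_mult[symmetric] power_add)
  also have "(\<Sum>i<r. z ^ (q ^ i)) + (\<Sum>i<r. z ^ (q ^ (r + i))) = (\<Sum>i<r + r. z ^ (q ^ i))"
    by (rule sum_lessThan_add_split[symmetric])
  finally show ?thesis unfolding trace_def by (simp add: mult_2)
qed

lemma Fq_closed:
  fixes a b :: 'a
  assumes "a \<in> subfield_q q" "b \<in> subfield_q q"
  shows "a + b \<in> subfield_q q" "a * b \<in> subfield_q q" "a - b \<in> subfield_q q"
    "- a \<in> subfield_q q" "a / b \<in> subfield_q q"
  using assms unfolding Fq_eq by (auto simp: E_add E_mult E_diff E_neg E_div)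

lemma Fq_0: "(0::'a) \<in> subfield_q q" unfolding Fq_eq by (rule E_0)

lemma key_identity:
  assumes mu: "\<mu> \<in> subfield_q q"
  shows "trace q r (Nm (x + \<mu> * \<beta> ^ (q ^ r))) =
         trace q r (Nm x) + \<mu> * trace q (2*r) (\<beta> * x) + \<mu>^2 * trace q r (Nm \<beta>)"
proof -
  define w where "w = \<mu> * \<beta> ^ (q ^ r)"
  have w1: "w ^ (q ^ r) = \<mu> * \<beta>"
    unfolding w_def by (simp add: power_mult_distrib Fq_pow[OF mu] conj_conj)
  have "Nm (x + w) = (x ^ (q ^ r) + w ^ (q ^ r)) * (x + w)"
    unfolding Nm_eq by (simp add: frob_add)
  also have "\<dots> = Nm x + \<mu> * ((\<beta> * x) + (\<beta> * x) ^ (q ^ r)) + \<mu>^2 * Nm \<beta>"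
    unfolding w1 by (simp add: Nm_eq w_def power_mult_distrib algebra_simps power2_eq_square)
  finally have "Nm (x + w) = Nm x + \<mu> * ((\<beta> * x) + (\<beta> * x) ^ (q ^ r)) + \<mu>^2 * Nm \<beta>" .
  moreover have mu2: "\<mu>^2 \<in> subfield_q q" using Fq_closed(2)[OF mu mu] by (simp add: power2_eq_square)
  ultimately have "trace q r (Nm (x + w)) = trace q r (Nm x) + trace q r (\<mu> * ((\<beta> * x) + (\<beta> * x) ^ (q ^ r))) + trace q r (\<mu>^2 * Nm \<beta>)"
    by (simp only: tr_add)
  then show ?thesis unfolding w_def by (simp only: tr_smul[OF mu] tr_smul[OF mu2] tr_r_m)
qed

lemma card_UNIV_ind: "card {x::'a. P x} = (\<Sum>x\<in>UNIV. if P x then 1 else 0)"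
  using card_ind[of "UNIV::'a set" P] by simp

lemma main_count:
  assumes beta: "\<beta> \<noteq> 0" and t: "t \<in> subfield_q q"
  shows "q * card {x. trace q r (Nm x) = 0 \<and> trace q (2*r) (\<beta> * x) = t}
          + q ^ r * card {\<mu>\<in>subfield_q q. \<mu>^2 * trace q r (Nm \<beta>) + \<mu> * t = 0}
        = q ^ (2*r - 1) + q ^ r"
proof -
  define Qf where "Qf x = trace q r (Nm x)" for x
  define L where "L x = trace q (2*r) (\<beta> * x)" for x
  define \<nu> where "\<nu> = trace q r (Nm \<beta>)"
  define Fq where "Fq = (subfield_q q :: 'a set)"
  define A where "A = card {x. Qf x = 0 \<and> L x = t}"
  define R where "R = card {\<mu>\<in>Fq. \<mu>^2 * \<nu> + \<mu> * t = 0}"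
  have QfF: "Qf x \<in> Fq" for x unfolding Qf_def Fq_def by (rule tr_in_Fq[OF Nm_in_K])
  have LF: "L x \<in> Fq" for x unfolding L_def Fq_def by (rule tr_in_Fq) (simp add: E_UNIV)
  have nuF: "\<nu> \<in> Fq" unfolding \<nu>_def Fq_def by (rule tr_in_Fq[OF Nm_in_K])
  have tF: "t \<in> Fq" using t Fq_def by simp
  have finF: "finite Fq" by simp
  have cardF: "card Fq = q" unfolding Fq_def by (rule card_Fq)
  have cardU: "card (UNIV::'a set) = Qc" using card_F Qc_def by simp
  have Lfib: "card {x. L x = t} = q ^ (2*r - 1)"
  proof -
    have cE: "card (Ef (2*r)) = q ^ (2*r)" using E_UNIV card_F by simp
    have "card {y \<in> Ef (2*r). trace q (2*r) y = t} = q ^ (2*r - 1)"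
      using tr_fiber[OF _ cE t] r_pos by simp
    moreover have "bij_betw (\<lambda>x. \<beta> * x) {x. L x = t} {y \<in> Ef (2*r). trace q (2*r) y = t}"
      by (rule bij_betw_byWitness[where f'="\<lambda>y. y / \<beta>"]) (use beta in \<open>auto simp: L_def E_UNIV\<close>)
    ultimately show ?thesis by (simp add: bij_betw_same_card)
  qed
  have transl: "card {x. Qf x + \<mu> * (L x - t) = 0} = card {y. Qf y = \<mu>^2 * \<nu> + \<mu> * t}"
    if mu: "\<mu> \<in> Fq" for \<mu>
  proof -
    define w where "w = \<mu> * \<beta> ^ (q ^ r)"
    have kid: "Qf (x + w) = Qf x + \<mu> * L x + \<mu>^2 * \<nu>" for x
      unfolding Qf_def L_def \<nu>_def w_def using key_identity mu Fq_def by simp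
    have "bij_betw (\<lambda>x. x + w) {x. Qf x + \<mu> * (L x - t) = 0} {y. Qf y = \<mu>^2 * \<nu> + \<mu> * t}"
    proof (rule bij_betw_byWitness[where f'="\<lambda>y. y - w"])
      show "\<forall>a\<in>{x. Qf x + \<mu> * (L x - t) = 0}. a + w - w = a" by simp
      show "\<forall>a\<in>{y. Qf y = \<mu>^2 * \<nu> + \<mu> * t}. a - w + w = a" by simp
      show "(\<lambda>x. x + w) ` {x. Qf x + \<mu> * (L x - t) = 0} \<subseteq> {y. Qf y = \<mu>^2 * \<nu> + \<mu> * t}"
      proof
        fix y assume "y \<in> (\<lambda>x. x + w) ` {x. Qf x + \<mu> * (L x - t) = 0}"
        then obtain x where x: "y = x + w" "Qf x + \<mu> * (L x - t) = 0" by auto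
        then have "Qf y = Qf x + \<mu> * L x + \<mu>^2 * \<nu>" using kid by simp
        also have "\<dots> = \<mu>^2 * \<nu> + \<mu> * t" using x(2) by (simp add: algebra_simps eq_neg_iff_add_eq_0[symmetric])
        finally show "y \<in> {y. Qf y = \<mu>^2 * \<nu> + \<mu> * t}" by simp
      qed
      show "(\<lambda>y. y - w) ` {y. Qf y = \<mu>^2 * \<nu> + \<mu> * t} \<subseteq> {x. Qf x + \<mu> * (L x - t) = 0}"
      proof
        fix x assume "x \<in> (\<lambda>y. y - w) ` {y. Qf y = \<mu>^2 * \<nu> + \<mu> * t}"
        then obtain y where y: "x = y - w" "Qf y = \<mu>^2 * \<nu> + \<mu> * t" by auto
        have "Qf y = Qf x + \<mu> * L x + \<mu>^2 * \<nu>" using kid[of x] y(1) by simp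
        then show "x \<in> {x. Qf x + \<mu> * (L x - t) = 0}" using y(2) by (simp add: algebra_simps)
      qed
    qed
    then show ?thesis by (simp add: bij_betw_same_card)
  qed
  have Zmu: "card {x. Qf x + \<mu> * (L x - t) = 0} + (if \<mu>^2 * \<nu> + \<mu> * t = 0 then q ^ r else 0)
             = (q ^ r + 1) * q ^ (r - 1)" if mu: "\<mu> \<in> Fq" for \<mu>
  proof -
    have "\<mu>^2 * \<nu> + \<mu> * t \<in> Fq"
      using mu nuF tF unfolding Fq_def by (simp add: Fq_closed power2_eq_square)
    then have "card {y. Qf y = \<mu>^2 * \<nu> + \<mu> * t} + (if \<mu>^2 * \<nu> + \<mu> * t = 0 then q ^ r else 0) = (q ^ r + 1) * q ^ (r - 1)"
      unfolding Qf_def using Zcount Fq_def by simp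
    then show ?thesis using transl[OF mu] by simp
  qed
  have S1: "(\<Sum>\<mu>\<in>Fq. card {x. Qf x + \<mu> * (L x - t) = 0}) + q ^ r * R = q * ((q ^ r + 1) * q ^ (r - 1))"
  proof -
    have "(\<Sum>\<mu>\<in>Fq. card {x. Qf x + \<mu> * (L x - t) = 0}) + (\<Sum>\<mu>\<in>Fq. (if \<mu>^2 * \<nu> + \<mu> * t = 0 then q ^ r else 0))
          = (\<Sum>\<mu>\<in>Fq. (q ^ r + 1) * q ^ (r - 1))"
      by (simp add: sum.distrib[symmetric] Zmu)
    moreover have "(\<Sum>\<mu>\<in>Fq. (if \<mu>^2 * \<nu> + \<mu> * t = 0 then q ^ r else 0)) = q ^ r * R"
      unfolding R_def card_ind[OF finF] sum_distrib_left by (intro sum.cong) auto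
    ultimately show ?thesis using cardF by simp
  qed
  have swap: "(\<Sum>\<mu>\<in>Fq. card {x. Qf x + \<mu> * (L x - t) = 0}) = (\<Sum>x\<in>UNIV. card {\<mu>\<in>Fq. Qf x + \<mu> * (L x - t) = 0})"
  proof -
    have a1: "card {\<mu>\<in>Fq. Qf x + \<mu> * (L x - t) = 0} = (\<Sum>\<mu>\<in>Fq. if Qf x + \<mu> * (L x - t) = 0 then 1 else 0)" for x
      by (rule card_ind[OF finF])
    have a2: "card {x. Qf x + \<mu> * (L x - t) = 0} = (\<Sum>x\<in>UNIV. if Qf x + \<mu> * (L x - t) = 0 then 1 else 0)" for \<mu>
      by (rule card_UNIV_ind)
    show ?thesis unfolding a1 a2 by (rule sum.swap)
  qed
  have perx: "card {\<mu>\<in>Fq. Qf x + \<mu> * (L x - t) = 0} = (if L x = t then (if Qf x = 0 then q else 0) else 1)" for x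
  proof (cases "L x = t")
    case True
    then show ?thesis using cardF by (cases "Qf x = 0") auto
  next
    case False
    then have nz: "L x - t \<noteq> 0" by simp
    have "{\<mu>\<in>Fq. Qf x + \<mu> * (L x - t) = 0} = {- Qf x / (L x - t)}"
    proof (rule Set.set_eqI, rule iffI)
      fix \<mu> assume "\<mu> \<in> {\<mu>\<in>Fq. Qf x + \<mu> * (L x - t) = 0}"
      then have "\<mu> * (L x - t) = - Qf x" by (simp add: eq_neg_iff_add_eq_0 add.commute)
      then have "\<mu> = - Qf x / (L x - t)" using nz by (metis nonzero_mult_div_cancel_right)
      then show "\<mu> \<in> {- Qf x / (L x - t)}" by simp
    next
      fix \<mu> assume "\<mu> \<in> {- Qf x / (L x - t)}"
      moreover have "- Qf x / (L x - t) \<in> Fq"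
        using QfF LF tF unfolding Fq_def by (simp add: Fq_closed)
      ultimately show "\<mu> \<in> {\<mu>\<in>Fq. Qf x + \<mu> * (L x - t) = 0}" using nz by simp
    qed
    then show ?thesis using False by simp
  qed
  have S2: "(\<Sum>x\<in>UNIV. card {\<mu>\<in>Fq. Qf x + \<mu> * (L x - t) = 0}) = q * A + card {x. L x \<noteq> t}"
  proof -
    have "(\<Sum>x\<in>UNIV. card {\<mu>\<in>Fq. Qf x + \<mu> * (L x - t) = 0})
        = (\<Sum>x\<in>UNIV. q * (if Qf x = 0 \<and> L x = t then 1 else 0) + (if L x \<noteq> t then 1 else 0))"
      unfolding perx by (intro sum.cong) auto
    also have "\<dots> = q * A + card {x. L x \<noteq> t}"
      unfolding A_def card_UNIV_ind sum.distrib sum_distrib_left by simp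
    finally show ?thesis .
  qed
  have S3: "card {x. L x \<noteq> t} + q ^ (2*r - 1) = Qc"
  proof -
    have "card {x. L x \<noteq> t} + card {x. L x = t} = card (UNIV::'a set)"
      by (subst card_Un_disjoint[symmetric]) (auto intro: arg_cong[where f=card])
    then show ?thesis using Lfib cardU by simp
  qed
  have ar1: "q * q ^ (r - 1) = q ^ r" using r_pos by (cases r) auto
  have ar2: "q * q ^ (2*r - 1) = q ^ (2*r)" using r_pos by (cases r) auto
  have ar3: "q ^ r * q ^ r = q ^ (2*r)" by (simp add: power_add[symmetric] mult_2)
  have "q * A + q ^ r * R + Qc = q ^ (2*r - 1) + q ^ r + Qc"
  proof -
    have "q * A + card {x. L x \<noteq> t} + q ^ r * R = q * ((q ^ r + 1) * q ^ (r - 1))"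
      using S1 swap S2 by simp
    also have "\<dots> = (q ^ r + 1) * (q * q ^ (r - 1))" by (simp only: mult.left_commute)
    also have "\<dots> = (q ^ r + 1) * q ^ r" by (simp only: ar1)
    also have "\<dots> = q ^ (2*r) + q ^ r" using ar3 by (simp add: algebra_simps)
    finally have "q * A + card {x. L x \<noteq> t} + q ^ r * R = q ^ (2*r) + q ^ r" .
    moreover have "q ^ (2*r) = Qc" by (simp add: Qc_def)
    ultimately show ?thesis using S3 ar2 by linarith
  qed
  then have "q * A + q ^ r * R = q ^ (2*r - 1) + q ^ r" by simp
  then show ?thesis unfolding A_def R_def Qf_def L_def \<nu>_def Fq_def .
qed

end



context ffs begin

lemma trace_sum: "trace q k (\<Sum>i\<in>A. f i) = (\<Sum>i\<in>A. trace q k (f i :: 'a))"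
  unfolding trace_def by (simp add: frob_sum sum.swap[of _ A])

lemma alpha_frob_inj:
  assumes "j < k" "k < 2*r"
  shows "\<alpha> ^ (q ^ j) \<noteq> \<alpha> ^ (q ^ k)"
proof
  assume h: "\<alpha> ^ (q ^ j) = \<alpha> ^ (q ^ k)"
  define d where "d = 2*r - k + j"
  have d1: "d \<ge> 1" "d < 2*r" using assms d_def by auto
  have "(\<alpha> ^ (q ^ j)) ^ (q ^ (2*r - k)) = (\<alpha> ^ (q ^ k)) ^ (q ^ (2*r - k))" using h by simp
  moreover have "(\<alpha> ^ (q ^ j)) ^ (q ^ (2*r - k)) = \<alpha> ^ (q ^ d)"
    unfolding d_def by (simp add: power_mult[symmetric] power_add[symmetric] add.commute)
  moreover have "(\<alpha> ^ (q ^ k)) ^ (q ^ (2*r - k)) = \<alpha> ^ Qc"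
    unfolding Qc_def using assms by (simp add: power_mult[symmetric] power_add[symmetric])
  ultimately have "\<alpha> ^ (q ^ d) = \<alpha>" using pow_card by simp
  have qd: "Suc (q ^ d - 1) = q ^ d" using q_gt1 by simp
  have "\<alpha> * \<alpha> ^ (q ^ d - 1) = \<alpha> * 1"
  proof -
    have "\<alpha> * \<alpha> ^ (q ^ d - 1) = \<alpha> ^ Suc (q ^ d - 1)" by (rule power_Suc[symmetric])
    also have "\<dots> = \<alpha> ^ (q ^ d)" by (simp only: qd)
    finally show ?thesis using \<open>\<alpha> ^ (q ^ d) = \<alpha>\<close> by simp
  qed
  then have "\<alpha> ^ (q ^ d - 1) = 1" using mult_left_cancel[OF alpha_nz] by blast
  then have dv: "Q1 dvd q ^ d - 1" using alpha_pow_eq1 by blast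
  have qd1: "1 < q ^ d" using q_gt1 d1 by (intro one_less_power) auto
  then have "q ^ d - 1 > 0" by simp
  then have "Q1 \<le> q ^ d - 1" using dv by (simp add: dvd_imp_le)
  moreover have "q ^ d < q ^ (2*r)" using q_gt1 d1 by (intro power_strict_increasing) auto
  ultimately show False using qd1 unfolding Q1_def Qc_def by linarith
qed

lemma lin_indep:
  assumes bF: "\<forall>i<2*r. b i \<in> subfield_q q"
    and s0: "(\<Sum>i<2*r. b i * \<alpha> ^ i) = 0"
  shows "\<forall>i<2*r. b i = 0"
proof (rule ccontr)
  assume nz: "\<not> (\<forall>i<2*r. b i = 0)"
  define P :: "'a poly" where "P = (\<Sum>i<2*r. monom (b i) i)"
  have cP: "coeff P n = (if n < 2*r then b n else 0)" for n
    unfolding P_def by (simp add: coeff_sum)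
  have P0: "P \<noteq> 0" using nz cP by (metis coeff_0)
  have degP: "degree P < 2*r"
  proof -
    have "degree P \<le> 2*r - 1" by (rule degree_le) (auto simp: cP)
    then show ?thesis using r_pos by simp
  qed
  have roots: "poly P (\<alpha> ^ (q ^ j)) = 0" for j
  proof -
    have "poly P (\<alpha> ^ (q ^ j)) = (\<Sum>i<2*r. b i * (\<alpha> ^ (q ^ j)) ^ i)"
      unfolding P_def by (simp add: poly_sum poly_monom)
    also have "\<dots> = (\<Sum>i<2*r. (b i * \<alpha> ^ i) ^ (q ^ j))"
      by (intro sum.cong) (auto simp: power_mult_distrib Fq_pow bF power_mult[symmetric] mult.commute)
    also have "\<dots> = (\<Sum>i<2*r. b i * \<alpha> ^ i) ^ (q ^ j)" by (simp add: frob_sum)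
    also have "\<dots> = 0" using s0 q_gt1 by (simp add: zero_power)
    finally show ?thesis .
  qed
  have "inj_on (\<lambda>j. \<alpha> ^ (q ^ j)) {..<2*r}"
  proof (rule inj_onI)
    fix j k assume jk: "j \<in> {..<2*r}" "k \<in> {..<2*r}" "\<alpha> ^ (q ^ j) = \<alpha> ^ (q ^ k)"
    show "j = k"
    proof (rule ccontr)
      assume "j \<noteq> k"
      then have "j < k \<or> k < j" by auto
      then show False using alpha_frob_inj jk by (metis lessThan_iff)
    qed
  qed
  then have "card ((\<lambda>j. \<alpha> ^ (q ^ j)) ` {..<2*r}) = 2*r" by (simp add: card_image)
  moreover have "(\<lambda>j. \<alpha> ^ (q ^ j)) ` {..<2*r} \<subseteq> {x. poly P x = 0}" using roots by auto
  ultimately have "2*r \<le> card {x. poly P x = 0}" by (metis card_mono finite)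
  also have "\<dots> \<le> degree P" using P0 by (rule card_poly_roots_bound)
  finally show False using degP by simp
qed

lemma A_bound:
  assumes "\<beta> \<noteq> 0" "t \<in> subfield_q q"
  shows "card {x. trace q r (Nm x) = 0 \<and> trace q (2*r) (\<beta> * x) = t} \<le> q ^ (2*r - 2)"
proof -
  let ?A = "card {x. trace q r (Nm x) = 0 \<and> trace q (2*r) (\<beta> * x) = t}"
  let ?R = "card {\<mu>\<in>subfield_q q. \<mu>^2 * trace q r (Nm \<beta>) + \<mu> * t = 0}"
  have "0 \<in> {\<mu>\<in>subfield_q q. \<mu>^2 * trace q r (Nm \<beta>) + \<mu> * t = 0}" using Fq_0 by simp
  then have "?R \<ge> 1" by (metis One_nat_def Suc_leI card_gt_0_iff empty_iff finite)
  then have "q ^ r * ?R \<ge> q ^ r" by simp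
  then have "q * ?A \<le> q ^ (2*r - 1)" using main_count[OF assms] by linarith
  moreover have "q ^ (2*r - 1) = q * q ^ (2*r - 2)" using r_pos by (cases r) auto
  ultimately show ?thesis using q_gt1 by simp
qed

lemma A_exact:
  assumes "\<not> p dvd r"
  shows "card {x. trace q r (Nm x) = 0 \<and> trace q (2*r) (1 * x) = 0} = q ^ (2*r - 2)"
proof -
  let ?A = "card {x. trace q r (Nm x) = 0 \<and> trace q (2*r) (1 * x) = 0}"
  have tr1: "trace q r (Nm 1) = (of_nat r :: 'a)" unfolding Nm_def trace_def by simp
  have "(of_nat r :: 'a) \<noteq> 0" using assms CHAR_eq by (simp add: of_nat_eq_0_iff_char_dvd)
  then have "{\<mu>\<in>subfield_q q. \<mu>^2 * trace q r (Nm (1::'a)) + \<mu> * 0 = 0} = {0}"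
    using Fq_0 tr1 by auto
  then have "q * ?A + q ^ r * 1 = q ^ (2*r - 1) + q ^ r"
    using main_count[of 1 0] Fq_0 by simp
  then have "q * ?A = q ^ (2*r - 1)" by simp
  moreover have "q ^ (2*r - 1) = q * q ^ (2*r - 2)" using r_pos by (cases r) auto
  ultimately show ?thesis using q_gt1 by simp
qed

end



lemma arith1:
  fixes n q X :: nat
  assumes h: "n + q*X = (q*X+1)*X" and X: "X \<ge> q" and q: "q \<ge> 2"
  shows "n = X*(q*X - q + 1)" "n - X*X = X*(q*X - X - q + 1)"
proof -
  have q2X: "q * X \<ge> 2 * X" using q by simp
  have i: "int n = int X * (int q * int X - int q + 1)"
  proof -
    have "int (n + q*X) = int ((q*X+1)*X)" using h by simp
    then have "int n + int q * int X = (int q * int X + 1) * int X" by (simp add: algebra_simps)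
    then show ?thesis by (simp add: algebra_simps)
  qed
  define Y where "Y = q*X - q + 1"
  have Y: "int Y = int q * int X - int q + 1" unfolding Y_def using q2X X by (simp add: of_nat_diff)
  show "n = X*(q*X - q + 1)" using i Y unfolding Y_def[symmetric]
    by (metis of_nat_eq_iff of_nat_mult)
  define Z where "Z = q*X - X - q + 1"
  have "X + q \<le> q * X" using q2X X by linarith
  then have "int (q*X - (X + q)) = int q * int X - int X - int q" by (simp add: of_nat_diff)
  moreover have "q*X - X - q + 1 = q*X - (X + q) + 1" by simp
  ultimately have Z: "int Z = int q * int X - int X - int q + 1" unfolding Z_def by simp
  have "int (n - X*X) = int n - int X * int X"
  proof -
    have "int X * int X \<le> int n" unfolding i
    proof -
      have a: "2 * int X \<le> int q * int X" using q2X by (metis of_nat_mult of_nat_le_iff of_nat_numeral)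
      have b: "int q \<le> int X" using X by simp
      have "int q * int X - int q + 1 \<ge> int X" using a b by linarith
      then show "int X * int X \<le> int X * (int q * int X - int q + 1)" by (simp add: mult_left_mono)
    qed
    then have "X * X \<le> n" by (metis of_nat_le_iff of_nat_mult)
    then show ?thesis by (simp add: of_nat_diff)
  qed
  also have "\<dots> = int X * int Z" unfolding Z i by (simp add: algebra_simps)
  finally show "n - X*X = X*(q*X - X - q + 1)" unfolding Z_def[symmetric]
    by (metis of_nat_eq_iff of_nat_mult)
qed


context ffs begin

lemma G1_Suc: "G1 q m \<alpha> d (Suc i) j = trace q m (\<alpha> ^ i * d j) + (if i = 1 then 1 else 0)"
  unfolding G1_def by (cases "i = 0"; cases "i = 1") auto

lemma Fq_1: "(1::'a) \<in> subfield_q q" unfolding Fq_eq by (rule E_1)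

lemma card_D_split:
  assumes "finite D"
  shows "card {x\<in>D. P x} + card {x\<in>D. \<not> P x} = card D"
proof -
  have "D = {x\<in>D. P x} \<union> {x\<in>D. \<not> P x}" by auto
  moreover have "card ({x\<in>D. P x} \<union> {x\<in>D. \<not> P x}) = card {x\<in>D. P x} + card {x\<in>D. \<not> P x}"
    using assms by (intro card_Un_disjoint) auto
  ultimately show ?thesis by simp
qed

lemma code_params:
  fixes D :: "'a set" and d :: "nat \<Rightarrow> 'a" and n :: nat
  assumes r2: "r \<ge> 2" and Ddef: "D = {x. trace q r (x ^ (q ^ r + 1)) = 0}" and nD: "n = card D"
    and bij: "bij_betw d {..<n} D" and pr: "\<not> p dvd r"
  shows "n = q ^ (r - 1) * (q ^ r - q + 1)
    \<and> card (lin_code q (2*r + 1) (n + 2*r + 1) (G1' q (2*r) \<alpha> d)) = q ^ (2*r + 1)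
    \<and> min_dist (n + 2*r + 1) (lin_code q (2*r + 1) (n + 2*r + 1) (G1' q (2*r) \<alpha> d))
        = q ^ (r - 1) * (q ^ r - q ^ (r - 1) - q + 1) + 1"
proof -
  define m where "m = 2*r"
  define Fq where "Fq = (subfield_q q :: 'a set)"
  define X where "X = q ^ (r - 1)"
  define N where "N = n + m + 1"
  define cw where "cw a = (\<lambda>j. if j < N then (\<Sum>i<m+1. a i * G1' q m \<alpha> d i j) else 0)" for a
  define beta where "beta a = (\<Sum>i<m. a (Suc i) * \<alpha> ^ i)" for a :: "nat \<Rightarrow> 'a"
  define code where "code = lin_code q (m + 1) N (G1' q m \<alpha> d)"
  have code_eq: "code = {c. \<exists>a. (\<forall>i<m+1. a i \<in> Fq) \<and> c = cw a}"
    unfolding code_def lin_code_def cw_def Fq_def by simp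
  have D2: "D = {x. trace q r (Nm x) = 0}" unfolding Ddef Nm_def ..
  have finD: "finite D" by simp
  have m2: "m \<ge> 2" using r2 m_def by simp
  have qr: "q ^ r = q * X" unfolding X_def using r2 by (cases r) auto
  have e22: "2*r - 2 = (r - 1) + (r - 1)" using r2 by simp
  have XX: "q ^ (2*r - 2) = X * X" unfolding X_def e22 by (rule power_add)
  have nval: "n + q * X = (q * X + 1) * X"
    using Zcount[OF Fq_0] unfolding nD D2 qr X_def by simp
  have Xq: "X \<ge> q" unfolding X_def using power_increasing[of 1 "r-1" q] r2 q_gt1 by simp
  have q2: "q \<ge> 2" using q_gt1 by simp
  note ar = arith1[OF nval Xq q2]
  have C1: "cw a j = a j" if "j < m + 1" for a j
  proof -
    have "cw a j = (\<Sum>i<m+1. a i * (if i = j then 1 else 0))"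
      unfolding cw_def G1'_def N_def using that by simp
    also have "\<dots> = a j" using that by (simp add: if_distrib cong: if_cong)
    finally show ?thesis .
  qed
  have C2: "cw a (j + (m+1)) = (a 0 + a 2) + trace q m (beta a * d j)"
    if aF: "\<forall>i<m+1. a i \<in> Fq" and j: "j < n" for a j
  proof -
    have "cw a (j + (m+1)) = (\<Sum>i<Suc m. a i * G1 q m \<alpha> d i j)"
      unfolding cw_def G1'_def N_def using j by simp
    also have "\<dots> = a 0 * G1 q m \<alpha> d 0 j + (\<Sum>i<m. a (Suc i) * G1 q m \<alpha> d (Suc i) j)"
      by (rule sum.lessThan_Suc_shift)
    also have "(\<Sum>i<m. a (Suc i) * G1 q m \<alpha> d (Suc i) j)
        = (\<Sum>i<m. trace q m (a (Suc i) * \<alpha> ^ i * d j)) + (\<Sum>i<m. if i = 1 then a (Suc i) else 0)"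
    proof -
      have "a (Suc i) * G1 q m \<alpha> d (Suc i) j = trace q m (a (Suc i) * \<alpha> ^ i * d j) + (if i = 1 then a (Suc i) else 0)"
        if "i < m" for i
      proof -
        have "a (Suc i) \<in> subfield_q q" using aF that Fq_def by simp
        then show ?thesis unfolding G1_Suc by (simp add: distrib_left tr_smul mult.assoc)
      qed
      then show ?thesis by (simp add: sum.distrib)
    qed
    also have "(\<Sum>i<m. if i = 1 then a (Suc i) else 0) = a 2" using m2 by (simp add: numeral_2_eq_2)
    also have "(\<Sum>i<m. trace q m (a (Suc i) * \<alpha> ^ i * d j)) = trace q m (beta a * d j)"
      unfolding beta_def by (simp add: trace_sum sum_distrib_right)
    finally show ?thesis unfolding G1_def by (simp add: algebra_simps)
  qed
  have C3: "hamming_wt N (cw a) = card {j. j < m+1 \<and> a j \<noteq> 0}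
      + card {x\<in>D. (a 0 + a 2) + trace q m (beta a * x) \<noteq> 0}"
    if aF: "\<forall>i<m+1. a i \<in> Fq" for a
  proof -
    let ?c = "a 0 + a 2"
    let ?J = "{j. j < n \<and> ?c + trace q m (beta a * d j) \<noteq> 0}"
    have "{j. j < N \<and> cw a j \<noteq> 0} = {j. j < m+1 \<and> a j \<noteq> 0} \<union> (\<lambda>j. j + (m+1)) ` ?J"
    proof (rule Set.set_eqI, rule iffI)
      fix j assume h: "j \<in> {j. j < N \<and> cw a j \<noteq> 0}"
      show "j \<in> {j. j < m+1 \<and> a j \<noteq> 0} \<union> (\<lambda>j. j + (m+1)) ` ?J"
      proof (cases "j < m + 1")
        case True then show ?thesis using h C1 by auto
      next
        case False
        then have j: "j = (j - (m+1)) + (m+1)" "j - (m+1) < n" using h N_def by auto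
        then have "cw a j = ?c + trace q m (beta a * d (j - (m+1)))" using C2[OF aF j(2)] by metis
        then have "j - (m+1) \<in> ?J" using h j by auto
        then show ?thesis using j(1) by blast
      qed
    next
      fix j assume "j \<in> {j. j < m+1 \<and> a j \<noteq> 0} \<union> (\<lambda>j. j + (m+1)) ` ?J"
      then show "j \<in> {j. j < N \<and> cw a j \<noteq> 0}"
      proof
        assume "j \<in> {j. j < m+1 \<and> a j \<noteq> 0}" then show ?thesis using C1 N_def by auto
      next
        assume "j \<in> (\<lambda>j. j + (m+1)) ` ?J"
        then obtain k where k: "j = k + (m+1)" "k < n" "?c + trace q m (beta a * d k) \<noteq> 0" by auto
        then show ?thesis using C2[OF aF k(2)] N_def by auto
      qed
    qed
    moreover have "card ({j. j < m+1 \<and> a j \<noteq> 0} \<union> (\<lambda>j. j + (m+1)) ` ?J)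
        = card {j. j < m+1 \<and> a j \<noteq> 0} + card ((\<lambda>j. j + (m+1)) ` ?J)"
      by (rule card_Un_disjoint) auto
    ultimately have "hamming_wt N (cw a) = card {j. j < m+1 \<and> a j \<noteq> 0} + card ((\<lambda>j. j + (m+1)) ` ?J)"
      unfolding hamming_wt_def by simp
    also have "card ((\<lambda>j. j + (m+1)) ` ?J) = card ?J" by (rule card_image) (auto intro: inj_onI)
    also have "card ?J = card {x\<in>D. ?c + trace q m (beta a * x) \<noteq> 0}"
    proof -
      have inj: "inj_on d {..<n}" and img: "d ` {..<n} = D" using bij unfolding bij_betw_def by auto
      have "inj_on d ?J" by (rule inj_on_subset[OF inj]) auto
      moreover have "d ` ?J = {x\<in>D. ?c + trace q m (beta a * x) \<noteq> 0}"
      proof (rule Set.set_eqI, rule iffI)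
        fix x assume "x \<in> d ` ?J" then show "x \<in> {x\<in>D. ?c + trace q m (beta a * x) \<noteq> 0}" using img by auto
      next
        fix x assume h: "x \<in> {x\<in>D. ?c + trace q m (beta a * x) \<noteq> 0}"
        then have "x \<in> d ` {..<n}" using img by simp
        then obtain j where "j < n" "x = d j" by auto
        then show "x \<in> d ` ?J" using h by auto
      qed
      ultimately have "bij_betw d ?J {x\<in>D. ?c + trace q m (beta a * x) \<noteq> 0}" unfolding bij_betw_def by simp
      then show ?thesis by (rule bij_betw_same_card)
    qed
    finally show ?thesis .
  qed
  have wtD: "card {x\<in>D. c + trace q m (b * x) \<noteq> 0} = n - card {x. trace q r (Nm x) = 0 \<and> trace q (2*r) (b * x) = - c}"
    for b c
  proof -
    have "{x\<in>D. trace q m (b * x) = - c} = {x. trace q r (Nm x) = 0 \<and> trace q (2*r) (b * x) = - c}"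
      unfolding D2 m_def by auto
    moreover have "card {x\<in>D. trace q m (b * x) = - c} + card {x\<in>D. \<not> trace q m (b * x) = - c} = n"
      using card_D_split[OF finD] nD by simp
    moreover have "{x\<in>D. \<not> trace q m (b * x) = - c} = {x\<in>D. c + trace q m (b * x) \<noteq> 0}"
      by (auto simp: eq_neg_iff_add_eq_0 add.commute)
    ultimately show ?thesis by simp
  qed
  have AleN: "card {x. trace q r (Nm x) = 0 \<and> trace q (2*r) (b * x) = t} \<le> n" for b t
    unfolding nD D2 by (rule card_mono) auto
  have card_code: "card code = q ^ (m + 1)"
  proof -
    have "bij_betw cw (PiE {..<m+1} (\<lambda>_. Fq)) code"
    proof (rule bij_betw_imageI)
      show "inj_on cw (PiE {..<m+1} (\<lambda>_. Fq))"
      proof (rule inj_onI)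
        fix a a' assume a: "a \<in> PiE {..<m+1} (\<lambda>_. Fq)" and a': "a' \<in> PiE {..<m+1} (\<lambda>_. Fq)"
          and eq: "cw a = cw a'"
        show "a = a'"
        proof (rule PiE_ext[OF a a'])
          fix i assume "i \<in> {..<m+1}"
          then show "a i = a' i" using C1 eq by (metis lessThan_iff)
        qed
      qed
      show "cw ` PiE {..<m+1} (\<lambda>_. Fq) = code"
      proof (rule Set.set_eqI, rule iffI)
        fix c assume "c \<in> cw ` PiE {..<m+1} (\<lambda>_. Fq)"
        then obtain a where "a \<in> PiE {..<m+1} (\<lambda>_. Fq)" "c = cw a" by auto
        then show "c \<in> code" unfolding code_eq by (auto simp: PiE_iff)
      next
        fix c assume "c \<in> code"
        then obtain a where a: "\<forall>i<m+1. a i \<in> Fq" "c = cw a" unfolding code_eq by auto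
        have "restrict a {..<m+1} \<in> PiE {..<m+1} (\<lambda>_. Fq)" using a(1) by auto
        moreover have "cw (restrict a {..<m+1}) = cw a" unfolding cw_def by (intro ext) simp
        ultimately show "c \<in> cw ` PiE {..<m+1} (\<lambda>_. Fq)" using a(2) by (metis image_eqI)
      qed
    qed
    then have "card code = card (PiE {..<m+1} (\<lambda>_. Fq))" by (simp add: bij_betw_same_card)
    also have "\<dots> = q ^ (m + 1)" by (simp add: card_PiE Fq_def card_Fq)
    finally show ?thesis .
  qed
  define bound where "bound = 1 + (n - X * X)"
  define W where "W = {hamming_wt N c | c. c \<in> code \<and> c \<noteq> (\<lambda>_. 0)}"
  have lower: "bound \<le> w" if "w \<in> W" for w
  proof -
    obtain c where c: "w = hamming_wt N c" "c \<in> code" "c \<noteq> (\<lambda>_. 0)" using \<open>w \<in> W\<close> W_def by auto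
    then obtain a where a: "\<forall>i<m+1. a i \<in> Fq" "c = cw a" unfolding code_eq by auto
    have ex: "\<exists>i<m+1. a i \<noteq> 0"
    proof (rule ccontr)
      assume "\<not> (\<exists>i<m+1. a i \<noteq> 0)"
      then have "cw a = (\<lambda>_. 0)" unfolding cw_def by (intro ext) simp
      then show False using a c by simp
    qed
    have wt1: "card {j. j < m+1 \<and> a j \<noteq> 0} \<ge> 1"
    proof -
      obtain i where "i < m+1" "a i \<noteq> 0" using ex by auto
      then have "{j. j < m+1 \<and> a j \<noteq> 0} \<noteq> {}" by auto
      moreover have "finite {j. j < m+1 \<and> a j \<noteq> 0}" by simp
      ultimately show ?thesis by (simp add: Suc_le_eq card_gt_0_iff)
    qed
    have w: "w = card {j. j < m+1 \<and> a j \<noteq> 0} + card {x\<in>D. (a 0 + a 2) + trace q m (beta a * x) \<noteq> 0}"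
      using C3[OF a(1)] a(2) c(1) by simp
    show ?thesis
    proof (cases "beta a = 0")
      case False
      have "a 0 \<in> subfield_q q" "a 2 \<in> subfield_q q" using a(1) m2 Fq_def by auto
      then have tF: "- (a 0 + a 2) \<in> subfield_q q" by (intro Fq_closed(4) Fq_closed(1))
      have "card {x. trace q r (Nm x) = 0 \<and> trace q (2*r) (beta a * x) = - (a 0 + a 2)} \<le> X * X"
        using A_bound[OF False tF] XX by simp
      then show ?thesis using w wtD wt1 bound_def by simp
    next
      case True
      have h1: "\<forall>i<2*r. a (Suc i) \<in> subfield_q q" using a(1) unfolding m_def Fq_def by auto
      have h2: "(\<Sum>i<2*r. a (Suc i) * \<alpha> ^ i) = 0" using True unfolding beta_def m_def .
      note allz = lin_indep[OF h1 h2]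
      have "a (Suc 1) = 0" using allz r2 by simp
      then have a2: "a 2 = 0" by (simp add: numeral_2_eq_2)
      obtain i where i: "i < m+1" "a i \<noteq> 0" using ex by auto
      have a0: "a 0 \<noteq> 0"
      proof (cases i)
        case 0 then show ?thesis using i by simp
      next
        case (Suc k)
        then have "k < 2*r" using i m_def by simp
        then have "a (Suc k) = 0" using allz by simp
        then show ?thesis using i Suc by simp
      qed
      have "{x\<in>D. (a 0 + a 2) + trace q m (beta a * x) \<noteq> 0} = D"
        using a0 a2 True by (auto simp: tr_0)
      then have "w \<ge> 1 + n" using w wt1 nD by simp
      then show ?thesis unfolding bound_def by simp
    qed
  qed
  have member: "bound \<in> W"
  proof -
    define a1 where "a1 = (\<lambda>i::nat. if i = 1 then 1 else (0::'a))"
    have a1F: "\<forall>i<m+1. a1 i \<in> Fq" unfolding a1_def Fq_def using Fq_0 Fq_1 by auto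
    have inC: "cw a1 \<in> code" unfolding code_eq using a1F by auto
    have nz: "cw a1 \<noteq> (\<lambda>_. 0)"
    proof
      assume "cw a1 = (\<lambda>_. 0)"
      then have "cw a1 1 = 0" by simp
      moreover have "cw a1 1 = 1" using C1[of 1 a1] m2 a1_def by simp
      ultimately show False by simp
    qed
    have b1: "beta a1 = 1"
    proof -
      have "beta a1 = (\<Sum>i<m. if i = 0 then 1 else 0)" unfolding beta_def a1_def
        by (intro sum.cong) auto
      also have "\<dots> = 1" using m2 by simp
      finally show ?thesis .
    qed
    have wt: "card {j. j < m+1 \<and> a1 j \<noteq> 0} = 1"
    proof -
      have "{j. j < m+1 \<and> a1 j \<noteq> 0} = {1}" unfolding a1_def using m2 by auto
      then show ?thesis by simp
    qed
    have c0: "a1 0 + a1 2 = 0" unfolding a1_def by simp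
    have "hamming_wt N (cw a1) = 1 + (n - card {x. trace q r (Nm x) = 0 \<and> trace q (2*r) (1 * x) = - 0})"
      using C3[OF a1F] wt c0 b1 wtD[of 0 1] by simp
    also have "\<dots> = bound" using A_exact[OF pr] XX bound_def by simp
    finally show ?thesis unfolding W_def using inC nz by blast
  qed
  have finW: "finite W"
  proof -
    have "W \<subseteq> {..N}"
    proof
      fix w assume "w \<in> W"
      then obtain c :: "nat \<Rightarrow> 'a" where "w = hamming_wt N c" unfolding W_def by blast
      moreover have "card {j. j < N \<and> c j \<noteq> 0} \<le> card {..<N}" by (rule card_mono) auto
      ultimately show "w \<in> {..N}" unfolding hamming_wt_def by simp
    qed
    then show ?thesis by (rule finite_subset) simp
  qed
  have mind: "min_dist N code = bound"
    unfolding min_dist_def W_def[symmetric] by (rule Min_eqI[OF finW lower member])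
  show ?thesis
  proof (intro conjI)
    show "n = q ^ (r - 1) * (q ^ r - q + 1)" using ar(1) qr X_def by simp
    show "card (lin_code q (2*r + 1) (n + 2*r + 1) (G1' q (2*r) \<alpha> d)) = q ^ (2*r + 1)"
      using card_code unfolding code_def N_def m_def .
    have "min_dist N code = q ^ (r - 1) * (q ^ r - q ^ (r - 1) - q + 1) + 1"
      using mind ar(2) qr X_def bound_def by (simp add: mult.commute)
    then show "min_dist (n + 2*r + 1) (lin_code q (2*r + 1) (n + 2*r + 1) (G1' q (2*r) \<alpha> d))
        = q ^ (r - 1) * (q ^ r - q ^ (r - 1) - q + 1) + 1"
      unfolding code_def N_def m_def .
  qed
qed

end

theorem corollary3p12:
  fixes p e q r m :: nat and \<alpha> :: "'a::{field,finite}" and D :: "'a set"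
    and d :: "nat \<Rightarrow> 'a" and n :: nat
  assumes "prime p" and "e \<ge> 1" and "q = p ^ e" and "r \<ge> 2" and "m = 2 * r"
    and "card (UNIV :: 'a set) = q ^ m"
    and "D = {x. trace q r (x ^ (q ^ r + 1)) = 0}"
    and "n = card D"
    and "bij_betw d {..<n} D"
    and "mult_generator \<alpha>"
    and "\<not> p dvd r"
  shows "n = q ^ (r - 1) * (q ^ r - q + 1)
    \<and> card (lin_code q (m + 1) (n + m + 1) (G1' q m \<alpha> d)) = q ^ (m + 1)
    \<and> min_dist (n + m + 1) (lin_code q (m + 1) (n + m + 1) (G1' q m \<alpha> d))
        = q ^ (r - 1) * (q ^ r - q ^ (r - 1) - q + 1) + 1"
proof -
  interpret F: ffs p e q r \<alpha>
    by unfold_locales (use assms in auto)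
  show ?thesis unfolding assms(5)
    by (rule F.code_params[OF assms(4) assms(7) assms(8) assms(9) assms(11)])
qed

end
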